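(* Let $\mathbb F$ be a field of characteristic $p>0$ and let $\mathfrak g$ be a finite-dimensional restricted Lie algebra over $\mathbb F$ with $[p]$-operator $g\mapsto g^{[p]}$. Let $(\varphi,\omega)\in C^2_*(\mathfrak g)$, and suppose that $\varphi=d^1(\psi)$ for some $\psi\in C^1(\mathfrak g)$. Then $(\varphi,\mathrm{ind}^1(\psi))\in C^2_*(\mathfrak g)$ and $\mathrm{ind}^2(\varphi,\omega)=\mathrm{ind}^2(\varphi,\mathrm{ind}^1(\psi))$.
   Context: $C^1(\mathfrak g)=\mathfrak g^*$ and $C^2(\mathfrak g)=(\wedge^2\mathfrak g)^*$ (cochains with trivial coefficients $\mathbb F$); $d^1:C^1(\mathfrak g)\to C^2(\mathfrak g)$ is $d^1(\psi)(g\wedge h)=\psi([g,h])$. Given $\varphi\in C^2(\mathfrak g)$, a map $\omega:\mathfrak g\to\mathbb F$ is called $\varphi$-compatible if for all $g,h\in\mathfrak g$ and $a\in\mathbb F$: $\omega(ag)=a^p\omega(g)$ and $$\omega(g+h)=\omega(g)+\omega(h)+\sum \frac{1}{\#(g)}\varphi([g_1,g_2,g_3,\dots,g_{p-1}]\wedge g_p),$$ where the sum runs over all sequences $(g_1,\dots,g_p)$ with each $g_i\in\{g,h\}$, $g_1=g$, $g_2=h$, the bracket $[g_1,\dots,g_{p-1}]$ is the left-normed iterated bracket, and $\#(g)$ is the number of $g_i$ equal to $g$. $C^2_*(\mathfrak g)=\{(\varphi,\omega):\varphi\in C^2(\mathfrak g),\ \omega:\mathfrak g\to\mathbb F\text{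 is }\varphi\text{-compatible}\}$. For $\psi\in C^1(\mathfrak g)$, $\mathrm{ind}^1(\psi):\mathfrak g\to\mathbb F$ is $\mathrm{ind}^1(\psi)(g)=\psi(g^{[p]})$. For $(\varphi,\omega)\in C^2_*(\mathfrak g)$, $\mathrm{ind}^2(\varphi,\omega):\mathfrak g\times\mathfrak g\to\mathbb F$ is $\mathrm{ind}^2(\varphi,\omega)(g,h)=\varphi(g\wedge h^{[p]})-\varphi([g,h,\dots,h]\wedge h)$, where in the left-normed bracket $[g,h,\dots,h]$ the element $h$ appears $p-1$ times. *)

theory Defs
  imports Main "HOL.Vector_Spaces"
begin

definition lie_algebra :: "('k::field \<Rightarrow> 'g::ab_group_add \<Rightarrow> 'g) \<Rightarrow> ('g \<Rightarrow> 'g \<Rightarrow> 'g) \<Rightarrow> bool" where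
  "lie_algebra sc br \<longleftrightarrow>
     vector_space sc \<and>
     (\<forall>x y z. br (x + y) z = br x z + br y z) \<and>
     (\<forall>x y z. br x (y + z) = br x y + br x z) \<and>
     (\<forall>a x y. br (sc a x) y = sc a (br x y)) \<and>
     (\<forall>a x y. br x (sc a y) = sc a (br x y)) \<and>
     (\<forall>x. br x x = 0) \<and>
     (\<forall>x y z. br x (br y z) + br y (br z x) + br z (br x y) = 0)"

definition finite_dim :: "('k::field \<Rightarrow> 'g::ab_group_add \<Rightarrow> 'g) \<Rightarrow> bool" where
  "finite_dim sc \<longleftrightarrow> (\<exists>B. finite B \<and> module.span sc B = UNIV)"

text \<open>Jacobson's s_i(x,y): i * s_i(x,y) is the coefficient of t^(i-1) in ad(t x + y)^(p-1)(x).
  Expanding ad(t x + y)^(p-1) = sum over words (z_1,...,z_(p-1)) in {t x, y} of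
  ad z_1 o ... o ad z_(p-1); a word is encoded by a bool list (True = x).\<close>

definition jacobson_s :: "('k::field \<Rightarrow> 'g::ab_group_add \<Rightarrow> 'g) \<Rightarrow> ('g \<Rightarrow> 'g \<Rightarrow> 'g) \<Rightarrow> nat \<Rightarrow> nat \<Rightarrow> 'g \<Rightarrow> 'g \<Rightarrow> 'g" where
  "jacobson_s sc br p i x y =
     sc (inverse (of_nat i))
       (\<Sum>bs\<in>{bs::bool list. length bs = p - 1 \<and> count_list bs True = i - 1}.
          foldr br (map (\<lambda>b. if b then x else y) bs) x)"

definition restricted_lie_algebra ::
  "('k::field \<Rightarrow> 'g::ab_group_add \<Rightarrow> 'g) \<Rightarrow> ('g \<Rightarrow> 'g \<Rightarrow> 'g) \<Rightarrow> ('g \<Rightarrow> 'g) \<Rightarrow> bool" where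
  "restricted_lie_algebra sc br pw \<longleftrightarrow>
     lie_algebra sc br \<and>
     (\<forall>a x. pw (sc a x) = sc (a ^ CHAR('k)) (pw x)) \<and>
     (\<forall>x y. br (pw x) y = ((br x) ^^ CHAR('k)) y) \<and>
     (\<forall>x y. pw (x + y) = pw x + pw y + (\<Sum>i\<in>{1..CHAR('k) - 1}. jacobson_s sc br (CHAR('k)) i x y))"

text \<open>C^1: linear functionals. C^2 = (\<wedge>^2 g)^*: alternating bilinear forms phi, phi(g \<wedge> h) = phi g h.\<close>

definition C1 :: "('k::field \<Rightarrow> 'g::ab_group_add \<Rightarrow> 'g) \<Rightarrow> ('g \<Rightarrow> 'k) set" where
  "C1 sc = {\<psi>. Vector_Spaces.linear sc (*) \<psi>}"

definition C2 :: "('k::field \<Rightarrow> 'g::ab_group_add \<Rightarrow> 'g) \<Rightarrow> ('g \<Rightarrow> 'g \<Rightarrow> 'k) set" where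
  "C2 sc = {\<phi>. (\<forall>x. Vector_Spaces.linear sc (*) (\<phi> x)) \<and>
               (\<forall>y. Vector_Spaces.linear sc (*) (\<lambda>x. \<phi> x y)) \<and>
               (\<forall>x. \<phi> x x = 0)}"

definition d1 :: "('g \<Rightarrow> 'g \<Rightarrow> 'g) \<Rightarrow> ('g \<Rightarrow> 'k) \<Rightarrow> ('g \<Rightarrow> 'g \<Rightarrow> 'k)" where
  "d1 br \<psi> = (\<lambda>g h. \<psi> (br g h))"

text \<open>The sequences (g_1,...,g_p) with g_1 = g, g_2 = h and g_3..g_p in {g,h}
  are encoded by bool lists bs of length p-2 (True = g), so the sequence is
  g # h # map sel bs; #(g) = 1 + number of True in bs (positions chosen as g).
  The left-normed bracket [g_1,...,g_(p-1)] is foldl br g_1 [g_2,...,g_(p-1)].\<close>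

definition compatible ::
  "('k::field \<Rightarrow> 'g::ab_group_add \<Rightarrow> 'g) \<Rightarrow> ('g \<Rightarrow> 'g \<Rightarrow> 'g) \<Rightarrow> ('g \<Rightarrow> 'g \<Rightarrow> 'k) \<Rightarrow> ('g \<Rightarrow> 'k) \<Rightarrow> bool" where
  "compatible sc br \<phi> \<omega> \<longleftrightarrow>
     (\<forall>a g. \<omega> (sc a g) = a ^ CHAR('k) * \<omega> g) \<and>
     (\<forall>g h. \<omega> (g + h) = \<omega> g + \<omega> h +
        (\<Sum>bs\<in>{bs::bool list. length bs = CHAR('k) - 2}.
           (let tl_seq = h # map (\<lambda>b. if b then g else h) bs in
             inverse (of_nat (Suc (count_list bs True))) *
             \<phi> (foldl br g (butlast tl_seq)) (last tl_seq))))"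

definition C2_star ::
  "('k::field \<Rightarrow> 'g::ab_group_add \<Rightarrow> 'g) \<Rightarrow> ('g \<Rightarrow> 'g \<Rightarrow> 'g) \<Rightarrow> (('g \<Rightarrow> 'g \<Rightarrow> 'k) \<times> ('g \<Rightarrow> 'k)) set" where
  "C2_star sc br = {(\<phi>, \<omega>). \<phi> \<in> C2 sc \<and> compatible sc br \<phi> \<omega>}"

definition ind1 :: "('g \<Rightarrow> 'g) \<Rightarrow> ('g \<Rightarrow> 'k) \<Rightarrow> ('g \<Rightarrow> 'k)" where
  "ind1 pw \<psi> = (\<lambda>g. \<psi> (pw g))"

definition ind2 :: "('g \<Rightarrow> 'g \<Rightarrow> 'g) \<Rightarrow> ('g \<Rightarrow> 'g) \<Rightarrow> ('g \<Rightarrow> 'g \<Rightarrow> 'k::field) \<times> ('g \<Rightarrow> 'k) \<Rightarrow> 'g \<Rightarrow> 'g \<Rightarrow> 'k" where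
  "ind2 br pw \<phi>\<omega> = (\<lambda>g h. fst \<phi>\<omega> g (pw h) - fst \<phi>\<omega> (foldl br g (replicate (CHAR('k) - 1) h)) h)"

end

theory Submission
  imports Defs "HOL-Computational_Algebra.Computational_Algebra"
begin

lemma foldl_foldr_sign:
  fixes br :: "'g::ab_group_add \<Rightarrow> 'g \<Rightarrow> 'g"
  assumes anti: "\<And>x y. br x y = - br y x" and neg: "\<And>x y. br x (- y) = - br x y"
  shows "foldl br x ys = (if even (length ys) then foldr br (rev ys) x else - foldr br (rev ys) x)"
proof (induction ys rule: rev_induct)
  case Nil
  then show ?case by simp
next
  case (snoc y ys)
  have "foldl br x (ys @ [y]) = br (foldl br x ys) y" by simp
  also have "\<dots> = - br y (foldl br x ys)" by (rule anti)
  finally have e: "foldl br x (ys @ [y]) = - br y (foldl br x ys)" .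
  show ?case unfolding e snoc by (auto simp: neg)
qed

lemma foldr_zero:
  fixes br :: "'g::ab_group_add \<Rightarrow> 'g \<Rightarrow> 'g"
  assumes "\<And>y. br y 0 = 0"
  shows "foldr br xs 0 = 0"
  using assms by (induction xs) auto

lemma last_true_zero:
  fixes br :: "'g::ab_group_add \<Rightarrow> 'g \<Rightarrow> 'g"
  assumes z: "\<And>y. br y 0 = 0" and gg: "br g g = 0" and ne: "bs \<noteq> []" and lt: "last bs"
  shows "foldr br (map (\<lambda>b. if b then g else h) bs) g = 0"
proof -
  have eq: "bs = butlast bs @ [True]" using ne lt by (metis append_butlast_last_id)
  have "foldr br (map (\<lambda>b. if b then g else h) bs) g
     = foldr br (map (\<lambda>b. if b then g else h) (butlast bs)) (br g g)"
    by (subst eq) simp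
  also have "\<dots> = 0" using gg foldr_zero[of br, OF z] by simp
  finally show ?thesis .
qed

lemma count_full_last:
  assumes "count_list bs True = length bs" "bs \<noteq> []"
  shows "last bs"
proof (rule ccontr)
  assume "\<not> last bs"
  then have "bs = butlast bs @ [False]" using assms(2) by (metis append_butlast_last_id)
  then have "count_list bs True = count_list (butlast bs) True"
    by (metis add.right_neutral count_list.simps count_list_append)
  also have "\<dots> \<le> length (butlast bs)" by (rule count_le_length)
  also have "\<dots> < length bs" using assms(2) by simp
  finally show False using assms(1) by simp
qed

lemma finite_W: "finite {bs::bool list. length bs = k}"
  using finite_lists_length_eq[of "UNIV::bool set" k] by simp


theorem lemma2p1:
  fixes sc :: "'k::field \<Rightarrow> 'g::ab_group_add \<Rightarrow> 'g"
    and br :: "'g \<Rightarrow> 'g \<Rightarrow> 'g"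
    and pw :: "'g \<Rightarrow> 'g"
    and \<phi> :: "'g \<Rightarrow> 'g \<Rightarrow> 'k"
    and \<omega> :: "'g \<Rightarrow> 'k"
    and \<psi> :: "'g \<Rightarrow> 'k"
  assumes "CHAR('k) > 0"
    and "restricted_lie_algebra sc br pw"
    and "finite_dim sc"
    and "(\<phi>, \<omega>) \<in> C2_star sc br"
    and "\<psi> \<in> C1 sc"
    and "\<phi> = d1 br \<psi>"
  shows "(\<phi>, ind1 pw \<psi>) \<in> C2_star sc br \<and> ind2 br pw (\<phi>, \<omega>) = ind2 br pw (\<phi>, ind1 pw \<psi>)"
proof -
  define p where "p = CHAR('k)"
  have pp: "prime p" unfolding p_def using prime_CHAR_semidom assms(1) by blast
  then have p2: "p \<ge> 2" by (rule prime_ge_2_nat)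
  have lin: "Vector_Spaces.linear sc (*) \<psi>" using assms(5) by (simp add: C1_def)
  interpret L: Vector_Spaces.linear sc "(*)" \<psi> by (rule lin)
  have C2: "\<phi> \<in> C2 sc" using assms(4) by (simp add: C2_star_def)
  have lie: "lie_algebra sc br" and pwsc: "\<And>a x. pw (sc a x) = sc (a ^ p) (pw x)"
    and pwadd: "\<And>x y. pw (x + y) = pw x + pw y + (\<Sum>i\<in>{1..p - 1}. jacobson_s sc br p i x y)"
    using assms(2) unfolding restricted_lie_algebra_def p_def by auto
  have addl: "\<And>x y z. br (x + y) z = br x z + br y z"
    and addr: "\<And>x y z. br x (y + z) = br x y + br x z"
    and alt: "\<And>x. br x x = 0" using lie unfolding lie_algebra_def by auto
  have z: "\<And>y. br y 0 = 0"
  proof -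
    fix y have "br y (0 + 0) = br y 0 + br y 0" by (rule addr)
    then show "br y 0 = 0" by simp
  qed
  have anti: "\<And>x y. br x y = - br y x"
  proof -
    fix x y
    have "0 = br (x + y) (x + y)" using alt by simp
    also have "\<dots> = br x (x + y) + br y (x + y)" by (rule addl)
    also have "\<dots> = br x y + br y x" by (simp only: addr alt) simp
    finally have "br x y + br y x = 0" by simp
    then show "br x y = - br y x" by (simp add: eq_neg_iff_add_eq_0)
  qed
  have neg: "\<And>x y. br x (- y) = - br x y"
  proof -
    fix x y
    have "br x (y + - y) = br x y + br x (- y)" by (rule addr)
    then show "br x (- y) = - br x y" using z by (simp add: eq_neg_iff_add_eq_0 add.commute)
  qed
  have psi0: "\<psi> 0 = 0" using L.zero .
  have sign1: "\<psi> (- v) = \<psi> v" if "odd (p - 1)" for v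
  proof -
    have ev: "even p" using that p2 by (cases p) auto
    have "p = 2"
    proof (rule ccontr)
      assume "p \<noteq> 2"
      then have "p > 2" using p2 by simp
      then have "odd p" using pp prime_odd_nat by blast
      then show False using ev by simp
    qed
    then have "- (x::'k) = x" for x using uminus_CHAR_2 p_def by metis
    then show ?thesis using L.neg by metis
  qed
  define W where "W k = {bs::bool list. length bs = k}" for k
  have fW: "finite (W k)" for k unfolding W_def by (rule finite_W)
  have key: "(\<Sum>i\<in>{1..p - 1}. inverse (of_nat i) *
       (\<Sum>bs\<in>{bs::bool list. length bs = p - 1 \<and> count_list bs True = i - 1}.
          \<psi> (foldr br (map (\<lambda>b. if b then g else h) bs) g)))
     = (\<Sum>cs\<in>W (p - 2). inverse (of_nat (Suc (count_list cs True))) *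
          \<psi> (foldl br g (h # map (\<lambda>b. if b then g else h) cs)))" for g h
  proof -
    define sel where "sel = (\<lambda>b. if b then g else h)"
    define F where "F bs = \<psi> (foldr br (map sel bs) g)" for bs
    define R where "R cs = rev cs @ [False]" for cs
    have Fz: "F bs = 0" if "bs \<noteq> []" "last bs" for bs
      unfolding F_def sel_def using last_true_zero[of br g bs h, OF z alt that] psi0 by simp
    have "(\<Sum>cs\<in>W (p - 2). inverse (of_nat (Suc (count_list cs True))) *
          \<psi> (foldl br g (h # map sel cs)))
        = (\<Sum>cs\<in>W (p - 2). inverse (of_nat (Suc (count_list (R cs) True))) * F (R cs))"
    proof (rule sum.cong[OF refl])
      fix cs assume "cs \<in> W (p - 2)"
      then have len: "length (h # map sel cs) = p - 1" using p2 unfolding W_def by simp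
      have fr: "foldr br (rev (h # map sel cs)) g = foldr br (map sel (R cs)) g"
        unfolding R_def by (simp add: rev_map sel_def)
      have "\<psi> (foldl br g (h # map sel cs)) = F (R cs)"
        unfolding F_def foldl_foldr_sign[of br, OF anti neg, of g "h # map sel cs"] len fr
        using sign1 by auto
      then show "inverse (of_nat (Suc (count_list cs True))) * \<psi> (foldl br g (h # map sel cs))
          = inverse (of_nat (Suc (count_list (R cs) True))) * F (R cs)"
        unfolding R_def by simp
    qed
    also have "\<dots> = (\<Sum>bs\<in>R ` W (p - 2). inverse (of_nat (Suc (count_list bs True))) * F bs)"
    proof (rule sum.reindex[symmetric, unfolded comp_def])
      show "inj_on R (W (p - 2))" unfolding R_def inj_on_def by auto
    qed
    also have "\<dots> = (\<Sum>bs\<in>W (p - 1). inverse (of_nat (Suc (count_list bs True))) * F bs)"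
    proof (rule sum.mono_neutral_left[OF fW])
      show "R ` W (p - 2) \<subseteq> W (p - 1)" unfolding R_def W_def using p2 by auto
      show "\<forall>i\<in>W (p - 1) - R ` W (p - 2). inverse (of_nat (Suc (count_list i True))) * F i = 0"
      proof
        fix bs assume bs: "bs \<in> W (p - 1) - R ` W (p - 2)"
        then have ne: "bs \<noteq> []" using p2 unfolding W_def by auto
        have "last bs"
        proof (rule ccontr)
          assume "\<not> last bs"
          then have "bs = butlast bs @ [False]" using ne by (metis append_butlast_last_id)
          then have "bs = R (rev (butlast bs))" unfolding R_def by simp
          moreover have "rev (butlast bs) \<in> W (p - 2)" using bs unfolding W_def by auto
          ultimately show False using bs by blast
        qed
        then show "inverse (of_nat (Suc (count_list bs True))) * F bs = 0" using Fz ne by simp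
      qed
    qed
    also have "\<dots> = (\<Sum>i\<in>{1..p}. \<Sum>bs\<in>{bs \<in> W (p - 1). Suc (count_list bs True) = i}.
          inverse (of_nat (Suc (count_list bs True))) * F bs)"
    proof (rule sum.group[symmetric, OF fW finite_atLeastAtMost])
      show "(\<lambda>bs. Suc (count_list bs True)) ` W (p - 1) \<subseteq> {1..p}"
      proof
        fix i assume "i \<in> (\<lambda>bs. Suc (count_list bs True)) ` W (p - 1)"
        then obtain bs where "length bs = p - 1" "i = Suc (count_list bs True)" unfolding W_def by auto
        moreover have "count_list bs True \<le> length bs" by (rule count_le_length)
        ultimately show "i \<in> {1..p}" using p2 by auto
      qed
    qed
    also have "\<dots> = (\<Sum>i\<in>{1..p}. inverse (of_nat i) *
        (\<Sum>bs\<in>{bs::bool list. length bs = p - 1 \<and> count_list bs True = i - 1}. F bs))"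
    proof (rule sum.cong[OF refl])
      fix i assume i: "i \<in> {1..p}"
      have "{bs \<in> W (p - 1). Suc (count_list bs True) = i}
          = {bs::bool list. length bs = p - 1 \<and> count_list bs True = i - 1}"
        unfolding W_def using i by auto
      have "(\<Sum>bs\<in>{bs \<in> W (p - 1). Suc (count_list bs True) = i}.
          inverse (of_nat (Suc (count_list bs True))) * F bs)
         = (\<Sum>bs\<in>{bs \<in> W (p - 1). Suc (count_list bs True) = i}. inverse (of_nat i) * F bs)"
        by (rule sum.cong) auto
      also have "\<dots> = inverse (of_nat i) * (\<Sum>bs\<in>{bs \<in> W (p - 1). Suc (count_list bs True) = i}. F bs)"
        by (simp only: sum_distrib_left)
      finally show "(\<Sum>bs\<in>{bs \<in> W (p - 1). Suc (count_list bs True) = i}.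
          inverse (of_nat (Suc (count_list bs True))) * F bs)
        = inverse (of_nat i) * (\<Sum>bs\<in>{bs::bool list. length bs = p - 1 \<and> count_list bs True = i - 1}. F bs)"
        unfolding \<open>{bs \<in> W (p - 1). Suc (count_list bs True) = i} = _\<close> .
    qed
    also have "\<dots> = (\<Sum>i\<in>{1..p - 1}. inverse (of_nat i) *
        (\<Sum>bs\<in>{bs::bool list. length bs = p - 1 \<and> count_list bs True = i - 1}. F bs))"
    proof -
      have s: "{1..p} = insert p {1..p - 1}" using p2 by auto
      have "(\<Sum>bs\<in>{bs::bool list. length bs = p - 1 \<and> count_list bs True = p - 1}. F bs) = 0"
      proof (rule sum.neutral, rule ballI)
        fix bs assume "bs \<in> {bs::bool list. length bs = p - 1 \<and> count_list bs True = p - 1}"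
        then have "count_list bs True = length bs" "bs \<noteq> []" using p2 by auto
        then show "F bs = 0" using Fz count_full_last by blast
      qed
      then show ?thesis unfolding s using p2 by (simp add: sum.insert)
    qed
    finally show ?thesis unfolding F_def sel_def by simp
  qed
  have compat: "compatible sc br \<phi> (ind1 pw \<psi>)"
    unfolding compatible_def
  proof (intro conjI allI)
    fix a g
    show "ind1 pw \<psi> (sc a g) = a ^ CHAR('k) * ind1 pw \<psi> g"
      unfolding ind1_def pwsc p_def using L.scale by simp
  next
    fix g h
    have "ind1 pw \<psi> (g + h) = ind1 pw \<psi> g + ind1 pw \<psi> h +
        (\<Sum>i\<in>{1..p - 1}. inverse (of_nat i) *
       (\<Sum>bs\<in>{bs::bool list. length bs = p - 1 \<and> count_list bs True = i - 1}.
          \<psi> (foldr br (map (\<lambda>b. if b then g else h) bs) g)))"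
      unfolding ind1_def pwadd jacobson_s_def
      by (simp add: L.add L.sum L.scale)
    also have "\<dots> = ind1 pw \<psi> g + ind1 pw \<psi> h +
       (\<Sum>cs\<in>W (p - 2). inverse (of_nat (Suc (count_list cs True))) *
          \<psi> (foldl br g (h # map (\<lambda>b. if b then g else h) cs)))"
      by (simp only: key)
    also have "\<dots> = ind1 pw \<psi> g + ind1 pw \<psi> h +
        (\<Sum>bs\<in>{bs::bool list. length bs = CHAR('k) - 2}.
           (let tl_seq = h # map (\<lambda>b. if b then g else h) bs in
             inverse (of_nat (Suc (count_list bs True))) *
             \<phi> (foldl br g (butlast tl_seq)) (last tl_seq)))"
    proof -
      have e: "br (foldl br g (butlast (h # xs))) (last (h # xs)) = foldl br g (h # xs)" for xs
      proof -
        have "foldl br g (h # xs) = foldl br g (butlast (h # xs) @ [last (h # xs)])"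
          by (simp only: append_butlast_last_id[of "h # xs", OF list.distinct(2)])
        also have "\<dots> = br (foldl br g (butlast (h # xs))) (last (h # xs))" by simp
        finally show ?thesis by simp
      qed
      show ?thesis unfolding assms(6) d1_def W_def p_def Let_def e ..
    qed
    finally show "ind1 pw \<psi> (g + h) = ind1 pw \<psi> g + ind1 pw \<psi> h +
        (\<Sum>bs\<in>{bs::bool list. length bs = CHAR('k) - 2}.
           (let tl_seq = h # map (\<lambda>b. if b then g else h) bs in
             inverse (of_nat (Suc (count_list bs True))) *
             \<phi> (foldl br g (butlast tl_seq)) (last tl_seq)))" .
  qed
  show ?thesis using C2 compat by (simp add: C2_star_def ind2_def)
qed

end
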